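(* Let $G$ and $H$ be groups, $\Psi\colon G\to\operatorname{Aut}H$ a group homomorphism (written $g\mapsto\Psi_g$), and let $B\colon H\to G$ be a relative Rota--Baxter operator on $H$ with respect to $(G,\Psi)$. Let $H\rtimes_\Psi G$ be the semi-direct product. Then the map $$B'\colon H\rtimes_\Psi G\to H\rtimes_\Psi G,\qquad B'((h,a))=(e,\,a^{-1}B(h)),\quad h\in H,\ a\in G,$$ is a Rota--Baxter operator (of weight $1$) on $H\rtimes_\Psi G$.
   Context: A relative Rota--Baxter operator on $H$ with respect to $(G,\Psi)$ is a map $B\colon H\to G$ with $B(h)B(k)=B(h\Psi_{B(h)}(k))$ for all $h,k\in H$. The semi-direct product $H\rtimes_\Psi G$ is the set $H\times G$ with multiplication $(h,a)(k,b)=(h\Psi_a(k),ab)$; $e$ denotes the identity of $H$. A Rota--Baxter operator (of weight $1$) on a group $K$ is a map $R\colon K\to K$ with $R(u)R(v)=R(uR(u)vR(u)^{-1})$ for all $u,v\in K$. *)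

theory Defs
  imports "HOL-Algebra.Algebra"
begin

definition relative_RB ::
  "('g, 'm) monoid_scheme \<Rightarrow> ('h, 'n) monoid_scheme \<Rightarrow> ('g \<Rightarrow> 'h \<Rightarrow> 'h) \<Rightarrow> ('h \<Rightarrow> 'g) \<Rightarrow> bool"
  where "relative_RB G H Psi B \<longleftrightarrow>
     B \<in> carrier H \<rightarrow> carrier G \<and>
     (\<forall>h\<in>carrier H. \<forall>k\<in>carrier H.
        B h \<otimes>\<^bsub>G\<^esub> B k = B (h \<otimes>\<^bsub>H\<^esub> Psi (B h) k))"

definition semidirect ::
  "('h, 'n) monoid_scheme \<Rightarrow> ('g, 'm) monoid_scheme \<Rightarrow> ('g \<Rightarrow> 'h \<Rightarrow> 'h) \<Rightarrow> ('h \<times> 'g) monoid"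
  where "semidirect H G Psi =
     \<lparr>carrier = carrier H \<times> carrier G,
      monoid.mult = (\<lambda>(h, a) (k, b). (h \<otimes>\<^bsub>H\<^esub> Psi a k, a \<otimes>\<^bsub>G\<^esub> b)),
      one = (\<one>\<^bsub>H\<^esub>, \<one>\<^bsub>G\<^esub>)\<rparr>"

definition RB_operator :: "('k, 'n) monoid_scheme \<Rightarrow> ('k \<Rightarrow> 'k) \<Rightarrow> bool"
  where "RB_operator K R \<longleftrightarrow>
     R \<in> carrier K \<rightarrow> carrier K \<and>
     (\<forall>u\<in>carrier K. \<forall>v\<in>carrier K.
        R u \<otimes>\<^bsub>K\<^esub> R v =
        R (u \<otimes>\<^bsub>K\<^esub> R u \<otimes>\<^bsub>K\<^esub> v \<otimes>\<^bsub>K\<^esub> inv\<^bsub>K\<^esub> (R u)))"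

end

theory Submission
  imports Defs
begin

lemma psi_facts:
  assumes "group H" "Psi \<in> hom G (AutoGroup H)" "c \<in> carrier G"
  shows "Psi c \<in> hom H H" "inj_on (Psi c) (carrier H)"
proof -
  have "Psi c \<in> carrier (AutoGroup H)" using assms hom_carrier by blast
  hence "Psi c \<in> auto H" by (simp add: AutoGroup_def BijGroup_def)
  thus "Psi c \<in> hom H H" "inj_on (Psi c) (carrier H)"
    by (auto simp: auto_def Bij_def bij_betw_def)
qed

lemma semi_inv:
  assumes G: "group G" and H: "group H" and P: "Psi \<in> hom G (AutoGroup H)"
    and c: "c \<in> carrier G"
  shows "inv\<^bsub>semidirect H G Psi\<^esub> (\<one>\<^bsub>H\<^esub>, c) = (\<one>\<^bsub>H\<^esub>, inv\<^bsub>G\<^esub> c)"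
proof -
  interpret G: group G by fact
  interpret H: group H by fact
  have hc: "Psi c \<in> hom H H" and ic: "inj_on (Psi c) (carrier H)"
    using psi_facts[OF H P c] by auto
  have hc': "Psi (inv\<^bsub>G\<^esub> c) \<in> hom H H" using psi_facts[OF H P] c by auto
  have one1: "Psi c \<one>\<^bsub>H\<^esub> = \<one>\<^bsub>H\<^esub>"
    by (metis H.group_axioms group_hom.hom_one group_hom_axioms.intro group_hom_def hc)
  have one2: "Psi (inv\<^bsub>G\<^esub> c) \<one>\<^bsub>H\<^esub> = \<one>\<^bsub>H\<^esub>"
    by (metis H.group_axioms group_hom.hom_one group_hom_axioms.intro group_hom_def hc')
  have A: "(\<one>\<^bsub>H\<^esub>, inv\<^bsub>G\<^esub> c) \<in> carrier (semidirect H G Psi) \<and>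
      (\<one>\<^bsub>H\<^esub>, c) \<otimes>\<^bsub>semidirect H G Psi\<^esub> (\<one>\<^bsub>H\<^esub>, inv\<^bsub>G\<^esub> c) = \<one>\<^bsub>semidirect H G Psi\<^esub> \<and>
      (\<one>\<^bsub>H\<^esub>, inv\<^bsub>G\<^esub> c) \<otimes>\<^bsub>semidirect H G Psi\<^esub> (\<one>\<^bsub>H\<^esub>, c) = \<one>\<^bsub>semidirect H G Psi\<^esub>"
      using c one1 one2 by (simp add: semidirect_def)
  have B: "y = (\<one>\<^bsub>H\<^esub>, inv\<^bsub>G\<^esub> c)" if y: "y \<in> carrier (semidirect H G Psi) \<and>
      (\<one>\<^bsub>H\<^esub>, c) \<otimes>\<^bsub>semidirect H G Psi\<^esub> y = \<one>\<^bsub>semidirect H G Psi\<^esub> \<and>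
      y \<otimes>\<^bsub>semidirect H G Psi\<^esub> (\<one>\<^bsub>H\<^esub>, c) = \<one>\<^bsub>semidirect H G Psi\<^esub>" for y
  proof -
    obtain k d where yk: "y = (k, d)" by (cases y)
    have k: "k \<in> carrier H" and d: "d \<in> carrier G" using y yk by (auto simp: semidirect_def)
    have pk: "Psi c k \<in> carrier H" using hc k by (auto simp: hom_def)
    have e1: "Psi c k = \<one>\<^bsub>H\<^esub>" and e2: "c \<otimes>\<^bsub>G\<^esub> d = \<one>\<^bsub>G\<^esub>"
      using y yk pk by (auto simp: semidirect_def)
    have "k = \<one>\<^bsub>H\<^esub>" using e1 one1 ic k by (metis H.one_closed inj_onD)
    moreover have "d = inv\<^bsub>G\<^esub> c" using e2 c d by (metis G.inv_equality G.inv_comm)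
    ultimately show "y = (\<one>\<^bsub>H\<^esub>, inv\<^bsub>G\<^esub> c)" using yk by simp
  qed
  show ?thesis unfolding m_inv_def[of "semidirect H G Psi"] using A B by (rule the_equality)
qed

theorem proposition3p1:
  fixes G :: "('g, 'm) monoid_scheme" and H :: "('h, 'n) monoid_scheme"
    and Psi :: "'g \<Rightarrow> 'h \<Rightarrow> 'h" and B :: "'h \<Rightarrow> 'g"
  assumes "group G" and "group H"
    and "Psi \<in> hom G (AutoGroup H)"
    and "relative_RB G H Psi B"
  shows "RB_operator (semidirect H G Psi)
           (\<lambda>(h, a). (\<one>\<^bsub>H\<^esub>, inv\<^bsub>G\<^esub> a \<otimes>\<^bsub>G\<^esub> B h))"
proof -
  interpret G: group G by fact
  interpret H: group H by fact
  have Bc: "\<And>h. h \<in> carrier H \<Longrightarrow> B h \<in> carrier G" and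
    Bm: "\<And>h k. h \<in> carrier H \<Longrightarrow> k \<in> carrier H \<Longrightarrow> B h \<otimes>\<^bsub>G\<^esub> B k = B (h \<otimes>\<^bsub>H\<^esub> Psi (B h) k)"
    using assms(4) by (auto simp: relative_RB_def)
  have Pc: "\<And>c k. c \<in> carrier G \<Longrightarrow> k \<in> carrier H \<Longrightarrow> Psi c k \<in> carrier H"
    using psi_facts[OF assms(2,3)] by (auto simp: hom_def)
  have P1: "\<And>c. c \<in> carrier G \<Longrightarrow> Psi c \<one>\<^bsub>H\<^esub> = \<one>\<^bsub>H\<^esub>"
    by (metis H.group_axioms group_hom.hom_one group_hom_axioms.intro group_hom_def psi_facts(1)[OF assms(2,3)])
  let ?K = "semidirect H G Psi"
  let ?R = "\<lambda>(h, a). (\<one>\<^bsub>H\<^esub>, inv\<^bsub>G\<^esub> a \<otimes>\<^bsub>G\<^esub> B h)"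
  show ?thesis unfolding RB_operator_def
  proof (intro conjI ballI)
    show "?R \<in> carrier ?K \<rightarrow> carrier ?K"
      using Bc by (auto simp: semidirect_def)
  next
    fix u v assume u: "u \<in> carrier ?K" and v: "v \<in> carrier ?K"
    obtain h a where ua: "u = (h, a)" by (cases u)
    obtain k b where vb: "v = (k, b)" by (cases v)
    have h: "h \<in> carrier H" and a: "a \<in> carrier G" using u ua by (auto simp: semidirect_def)
    have k: "k \<in> carrier H" and b: "b \<in> carrier G" using v vb by (auto simp: semidirect_def)
    define c where "c = inv\<^bsub>G\<^esub> a \<otimes>\<^bsub>G\<^esub> B h"
    have c: "c \<in> carrier G" using a h Bc c_def by simp
    have Ru: "?R u = (\<one>\<^bsub>H\<^esub>, c)" using ua c_def by simp
    have inv: "inv\<^bsub>?K\<^esub> (?R u) = (\<one>\<^bsub>H\<^esub>, inv\<^bsub>G\<^esub> c)"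
      using Ru semi_inv[OF assms(1-3) c] by simp
    have ac: "a \<otimes>\<^bsub>G\<^esub> c = B h" using a h Bc c_def
      by (simp add: G.m_assoc[symmetric])
    have pk: "Psi (B h) k \<in> carrier H" using Pc Bc h k by blast
    have w: "u \<otimes>\<^bsub>?K\<^esub> ?R u \<otimes>\<^bsub>?K\<^esub> v \<otimes>\<^bsub>?K\<^esub> inv\<^bsub>?K\<^esub> (?R u)
        = (h \<otimes>\<^bsub>H\<^esub> Psi (B h) k, B h \<otimes>\<^bsub>G\<^esub> b \<otimes>\<^bsub>G\<^esub> inv\<^bsub>G\<^esub> c)"
      using Ru inv ua vb h k pk P1 a b c ac Bc
      by (simp add: semidirect_def P1 G.m_closed)
    have lhs: "?R u \<otimes>\<^bsub>?K\<^esub> ?R v = (\<one>\<^bsub>H\<^esub>, c \<otimes>\<^bsub>G\<^esub> (inv\<^bsub>G\<^esub> b \<otimes>\<^bsub>G\<^esub> B k))"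
      using Ru vb P1 c by (simp add: semidirect_def)
    have "inv\<^bsub>G\<^esub> (B h \<otimes>\<^bsub>G\<^esub> b \<otimes>\<^bsub>G\<^esub> inv\<^bsub>G\<^esub> c) \<otimes>\<^bsub>G\<^esub> B (h \<otimes>\<^bsub>H\<^esub> Psi (B h) k)
        = inv\<^bsub>G\<^esub> (B h \<otimes>\<^bsub>G\<^esub> b \<otimes>\<^bsub>G\<^esub> inv\<^bsub>G\<^esub> c) \<otimes>\<^bsub>G\<^esub> (B h \<otimes>\<^bsub>G\<^esub> B k)"
      using Bm h k by simp
    also have "\<dots> = c \<otimes>\<^bsub>G\<^esub> (inv\<^bsub>G\<^esub> b \<otimes>\<^bsub>G\<^esub> B k)"
      using Bc h k b c
      by (simp add: G.inv_mult_group G.m_assoc flip: G.m_assoc[of "inv\<^bsub>G\<^esub> B h" "B h"])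
    finally show "?R u \<otimes>\<^bsub>?K\<^esub> ?R v = ?R (u \<otimes>\<^bsub>?K\<^esub> ?R u \<otimes>\<^bsub>?K\<^esub> v \<otimes>\<^bsub>?K\<^esub> inv\<^bsub>?K\<^esub> (?R u))"
      using lhs w by simp
  qed
qed

end
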